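(* Let $n\ge1$, let $\mathbf u(z)\in\mathbb R^n$ be a column vector function and let $A$ be a constant real skew-symmetric $n\times n$ matrix. Define block matrices of block size $(1,n,1)\times(1,n,1)$ \[ {\cal B}_0=\begin{pmatrix} -1 & 0 & 0\\ 0 & 0 & 0\\ 0 & 0 & 1 \end{pmatrix},\quad {\cal B}_1=\begin{pmatrix} 0 & \mathbf u^T & 0\\ \mathbf u & 0 & \mathbf u\\ 0 & \mathbf u^T & 0 \end{pmatrix},\quad {\cal B}_2=\begin{pmatrix} (\mathbf u,\mathbf u) & -(\mathbf u')^T & 0\\ \mathbf u' & 0 & -\mathbf u'\\ 0 & (\mathbf u')^T & -(\mathbf u,\mathbf u)\end{pmatrix}, \] \[ {\cal B}_3=\begin{pmatrix} 0 & (\mathbf u,\mathbf u)\mathbf u^T & 0\\ (\mathbf u,\mathbf u)\mathbf u & 2\mathbf u'\mathbf u^T-2\mathbf u(\mathbf u')^T & (\mathbf u,\mathbf u)\mathbf u\\ 0 & (\mathbf u,\mathbf u)\mathbf u^T & 0 \end{pmatrix},\quad {\cal A}_0=\begin{pmatrix} 0&0&0\\ 0&A&0\\ 0&0&0 \end{pmatrix}, \] and \[ {\cal A}=-\zeta(\zeta{\cal B}_0+{\cal B}_1)+z{\cal B}_0-{\cal B}_2-\zeta^{-1}({\cal B}''_1-z{\cal B}_1-{\cal B}_3-{\cal A}_0),\qquad {\cal B}=\zeta{\cal B}_0+{\cal B}_1. \] Then the equation \[ \mathbf u'''= 3(\mathbf u,\mathbf u)\mathbf u'+z\mathbf u'+\mathbf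 u+A\mathbf u \] admits the isomonodromic Lax representation ${\cal A}'={\cal B}_\zeta+[{\cal B},{\cal A}]$.
   Context: Primes denote derivatives with respect to $z$; $\zeta$ is a spectral parameter independent of $z$; $(\cdot,\cdot)$ is the standard scalar product. "Admits the Lax representation" means the matrix equation holds identically in $\zeta$ by virtue of the equation. *)

theory Defs
  imports "HOL-Analysis.Analysis"
begin

text \<open>Block index set of block size (1,n,1): Inl () is the first row/column,
  Inr (Inl i) the middle block (i ranges over the n-element type 'n),
  Inr (Inr ()) the last row/column.\<close>
type_synonym 'n bidx = "unit + 'n + unit"

definition blockM ::
  "real \<Rightarrow> real^('n::finite) \<Rightarrow> real \<Rightarrow>
   real^'n \<Rightarrow> real^'n^'n \<Rightarrow> real^'n \<Rightarrow>
   real \<Rightarrow> real^'n \<Rightarrow> real \<Rightarrow> real^('n bidx)^('n bidx)" where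
  "blockM a11 r12 a13 c21 M22 c23 a31 r32 a33 =
     (\<chi> i j. case i of
        Inl _ \<Rightarrow> (case j of Inl _ \<Rightarrow> a11 | Inr (Inl q) \<Rightarrow> r12 $ q | Inr (Inr _) \<Rightarrow> a13)
      | Inr (Inl p) \<Rightarrow> (case j of Inl _ \<Rightarrow> c21 $ p | Inr (Inl q) \<Rightarrow> M22 $ p $ q
                                | Inr (Inr _) \<Rightarrow> c23 $ p)
      | Inr (Inr _) \<Rightarrow> (case j of Inl _ \<Rightarrow> a31 | Inr (Inl q) \<Rightarrow> r32 $ q | Inr (Inr _) \<Rightarrow> a33))"

definition outerp :: "real^('n::finite) \<Rightarrow> real^'n \<Rightarrow> real^'n^'n" where
  "outerp v w = (\<chi> p q. v $ p * w $ q)"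

definition LB0 :: "real^(('n::finite) bidx)^('n bidx)" where
  "LB0 = blockM (-1) 0 0  0 0 0  0 0 1"

definition LB1 :: "real^('n::finite) \<Rightarrow> real^('n bidx)^('n bidx)" where
  "LB1 u = blockM 0 u 0  u 0 u  0 u 0"

definition LB2 :: "real^('n::finite) \<Rightarrow> real^'n \<Rightarrow> real^('n bidx)^('n bidx)" where
  "LB2 u u1 = blockM (u \<bullet> u) (- u1) 0  u1 0 (- u1)  0 u1 (- (u \<bullet> u))"

definition LB3 :: "real^('n::finite) \<Rightarrow> real^'n \<Rightarrow> real^('n bidx)^('n bidx)" where
  "LB3 u u1 = blockM 0 ((u \<bullet> u) *\<^sub>R u) 0
                    ((u \<bullet> u) *\<^sub>R u) (2 *\<^sub>R outerp u1 u - 2 *\<^sub>R outerp u u1) ((u \<bullet> u) *\<^sub>R u)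
                    0 ((u \<bullet> u) *\<^sub>R u) 0"

definition LA0 :: "real^('n::finite)^'n \<Rightarrow> real^('n bidx)^('n bidx)" where
  "LA0 A = blockM 0 0 0  0 A 0  0 0 0"

definition LaxB :: "real^('n::finite) \<Rightarrow> real \<Rightarrow> real^('n bidx)^('n bidx)" where
  "LaxB u \<zeta> = \<zeta> *\<^sub>R LB0 + LB1 u"

text \<open>The matrix A(z,zeta), with u = u(z), u1 = u'(z), u2 = u''(z);
  B1'' = LB1 u2 since B1 is linear in u.\<close>
definition LaxA :: "real^('n::finite)^'n \<Rightarrow> real^'n \<Rightarrow> real^'n \<Rightarrow> real^'n \<Rightarrow> real \<Rightarrow> real
                    \<Rightarrow> real^('n bidx)^('n bidx)" where
  "LaxA A u u1 u2 z \<zeta> =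
     - (\<zeta> *\<^sub>R (\<zeta> *\<^sub>R LB0 + LB1 u)) + z *\<^sub>R LB0 - LB2 u u1
     - inverse \<zeta> *\<^sub>R (LB1 u2 - z *\<^sub>R LB1 u - LB3 u u1 - LA0 A)"

end

theory Submission
  imports Defs
begin

lemma vec_hvd:
  fixes f :: "real \<Rightarrow> 'a::real_normed_vector^'m"
  assumes "\<And>i. ((\<lambda>t. f t $ i) has_vector_derivative D $ i) F"
  shows "(f has_vector_derivative D) F"
  using assms unfolding has_vector_derivative_def has_derivative_def
  apply (intro conjI bounded_linear_scaleR_left vec_tendstoI)
  apply (drule_tac x=i in meta_spec)
  apply simp
  done

lemma hvd_nth:
  fixes f :: "real \<Rightarrow> 'a::real_normed_vector^'m"
  assumes "(f has_vector_derivative D) F"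
  shows "((\<lambda>t. f t $ i) has_vector_derivative D $ i) F"
  using bounded_linear.has_vector_derivative[OF bounded_linear_vec_nth assms] by simp


lemma blockM_hvd:
  fixes a11 a13 a31 a33 :: "real \<Rightarrow> real" and r12 c21 c23 r32 :: "real \<Rightarrow> real^'n::finite"
    and M :: "real \<Rightarrow> real^'n^'n"
  assumes "(a11 has_vector_derivative b11) F" "(r12 has_vector_derivative s12) F"
    "(a13 has_vector_derivative b13) F" "(c21 has_vector_derivative d21) F"
    "(M has_vector_derivative N) F" "(c23 has_vector_derivative d23) F"
    "(a31 has_vector_derivative b31) F" "(r32 has_vector_derivative s32) F"
    "(a33 has_vector_derivative b33) F"
  shows "((\<lambda>t. blockM (a11 t) (r12 t) (a13 t) (c21 t) (M t) (c23 t) (a31 t) (r32 t) (a33 t))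
     has_vector_derivative blockM b11 s12 b13 d21 N d23 b31 s32 b33) F"
  apply (rule vec_hvd, rule vec_hvd)
  subgoal for i j
    by (cases i rule: sum.exhaust; cases j rule: sum.exhaust)
       (auto simp: blockM_def assms hvd_nth split: sum.split)
  done

lemma sum_UNIV_plus:
  fixes f :: "('a::finite + 'b::finite) \<Rightarrow> 'c::comm_monoid_add"
  shows "sum f UNIV = (\<Sum>x\<in>UNIV. f (Inl x)) + (\<Sum>y\<in>UNIV. f (Inr y))"
proof -
  have "sum f UNIV = sum f (Inl ` UNIV) + sum f (Inr ` UNIV)"
    unfolding UNIV_sum by (rule sum.union_disjoint) auto
  also have "\<dots> = (\<Sum>x\<in>UNIV. f (Inl x)) + (\<Sum>y\<in>UNIV. f (Inr y))"
    by (simp add: sum.reindex)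
  finally show ?thesis .
qed

lemma sum_bidx:
  fixes f :: "('n::finite) bidx \<Rightarrow> 'c::comm_monoid_add"
  shows "sum f UNIV = f (Inl ()) + (\<Sum>q\<in>UNIV. f (Inr (Inl q))) + f (Inr (Inr ()))"
  by (simp add: sum_UNIV_plus add.assoc UNIV_unit)

lemma blockM_add:
  "blockM a11 r12 a13 c21 M c23 a31 r32 a33 + blockM b11 s12 b13 d21 N d23 b31 s32 b33
   = blockM (a11+b11) (r12+s12) (a13+b13) (c21+d21) (M+N) (c23+d23) (a31+b31) (r32+s32) (a33+b33)"
  by (simp add: vec_eq_iff blockM_def split: sum.split)

lemma blockM_diff:
  "blockM a11 r12 a13 c21 M c23 a31 r32 a33 - blockM b11 s12 b13 d21 N d23 b31 s32 b33
   = blockM (a11-b11) (r12-s12) (a13-b13) (c21-d21) (M-N) (c23-d23) (a31-b31) (r32-s32) (a33-b33)"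
  by (simp add: vec_eq_iff blockM_def split: sum.split)

lemma blockM_uminus:
  "- blockM a11 r12 a13 c21 M c23 a31 r32 a33
   = blockM (-a11) (-r12) (-a13) (-c21) (-M) (-c23) (-a31) (-r32) (-a33)"
  by (simp add: vec_eq_iff blockM_def split: sum.split)

lemma blockM_scaleR:
  "c *\<^sub>R blockM a11 r12 a13 c21 M c23 a31 r32 a33
   = blockM (c*a11) (c*\<^sub>Rr12) (c*a13) (c*\<^sub>Rc21) (c*\<^sub>RM) (c*\<^sub>Rc23) (c*a31) (c*\<^sub>Rr32) (c*a33)"
  by (simp add: vec_eq_iff blockM_def split: sum.split)

lemma blockM_mult:
  "blockM a11 r12 a13 c21 M c23 a31 r32 a33 ** blockM b11 s12 b13 d21 N d23 b31 s32 b33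
   = blockM (a11*b11 + r12 \<bullet> d21 + a13*b31)
            (a11 *\<^sub>R s12 + r12 v* N + a13 *\<^sub>R s32)
            (a11*b13 + r12 \<bullet> d23 + a13*b33)
            (b11 *\<^sub>R c21 + M *v d21 + b31 *\<^sub>R c23)
            (outerp c21 s12 + M ** N + outerp c23 s32)
            (b13 *\<^sub>R c21 + M *v d23 + b33 *\<^sub>R c23)
            (a31*b11 + r32 \<bullet> d21 + a33*b31)
            (a31 *\<^sub>R s12 + r32 v* N + a33 *\<^sub>R s32)
            (a31*b13 + r32 \<bullet> d23 + a33*b33)"
  unfolding vec_eq_iff
  apply (intro allI)
  subgoal for i j
    by (cases i rule: sum.exhaust; cases j rule: sum.exhaust)
       (auto simp: blockM_def matrix_matrix_mult_def sum_bidx inner_vec_def outerp_def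
          vector_matrix_mult_def matrix_vector_mult_def mult.commute split: sum.split)
  done

lemma hvd_inner_field:
  fixes f g :: "real \<Rightarrow> 'a::real_inner"
  assumes "(f has_vector_derivative f') (at x within s)" "(g has_vector_derivative g') (at x within s)"
  shows "((\<lambda>t. f t \<bullet> g t) has_field_derivative (f x \<bullet> g' + f' \<bullet> g x)) (at x within s)"
  unfolding has_real_derivative_iff_has_vector_derivative
  by (rule bounded_bilinear.has_vector_derivative[OF bounded_bilinear_inner assms])

lemma hvd_outerp:
  fixes f g :: "real \<Rightarrow> real^'n::finite"
  assumes "(f has_vector_derivative f') (at x within s)" "(g has_vector_derivative g') (at x within s)"
  shows "((\<lambda>t. outerp (f t) (g t)) has_vector_derivative (outerp f' (g x) + outerp (f x) g')) (at x within s)"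
  apply (rule vec_hvd, rule vec_hvd)
  subgoal for i j
    using has_vector_derivative_mult[OF hvd_nth[OF assms(1), of i] hvd_nth[OF assms(2), of j]]
    by (simp add: outerp_def algebra_simps)
  done

lemma blockM_hvd':
  fixes a11 a13 a31 a33 :: "real \<Rightarrow> real" and r12 c21 c23 r32 :: "real \<Rightarrow> real^'n::finite"
    and M :: "real \<Rightarrow> real^'n^'n"
  assumes "(a11 has_field_derivative b11) F" "(r12 has_vector_derivative s12) F"
    "(a13 has_field_derivative b13) F" "(c21 has_vector_derivative d21) F"
    "(M has_vector_derivative N) F" "(c23 has_vector_derivative d23) F"
    "(a31 has_field_derivative b31) F" "(r32 has_vector_derivative s32) F"
    "(a33 has_field_derivative b33) F"
  shows "((\<lambda>t. blockM (a11 t) (r12 t) (a13 t) (c21 t) (M t) (c23 t) (a31 t) (r32 t) (a33 t))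
     has_vector_derivative blockM b11 s12 b13 d21 N d23 b31 s32 b33) F"
  using assms unfolding has_real_derivative_iff_has_vector_derivative by (rule blockM_hvd)

lemma outerp_zero[simp]: "outerp 0 v = 0" "outerp v 0 = 0"
  by (simp_all add: outerp_def vec_eq_iff)

lemma mat_zero_simps[simp]:
  fixes N :: "real^'n::finite^'n" and v :: "real^'n"
  shows "(0::real^'n^'n) ** N = 0" "N ** (0::real^'n^'n) = 0" "(0::real^'n^'n) *v v = 0" "v v* (0::real^'n^'n) = 0"
    "N *v 0 = 0" "0 v* N = 0"
  by (simp_all add: vec_eq_iff matrix_matrix_mult_def matrix_vector_mult_def vector_matrix_mult_def)

lemma vm_lin:
  fixes M N :: "real^'n::finite^'n" and v w :: "real^'n"
  shows "v v* (M + N) = v v* M + v v* N" "v v* (M - N) = v v* M - v v* N"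
    "v v* (c *\<^sub>R M) = c *\<^sub>R (v v* M)" "v v* (- M) = - (v v* M)"
    "(v + w) v* M = v v* M + w v* M" "(v - w) v* M = v v* M - w v* M"
    "(c *\<^sub>R v) v* M = c *\<^sub>R (v v* M)" "(- v) v* M = - (v v* M)"
    "(M + N) *v v = M *v v + N *v v" "(M - N) *v v = M *v v - N *v v"
    "(c *\<^sub>R M) *v v = c *\<^sub>R (M *v v)" "(- M) *v v = - (M *v v)"
    "M *v (v + w) = M *v v + M *v w" "M *v (v - w) = M *v v - M *v w"
    "M *v (c *\<^sub>R v) = c *\<^sub>R (M *v v)" "M *v (- v) = - (M *v v)"
  by (simp_all add: vec_eq_iff vector_matrix_mult_def matrix_vector_mult_def algebra_simps
      sum.distrib sum_subtractf sum_distrib_left sum_negf)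

lemma outerp_nth: "outerp a b $ i $ j = a $ i * b $ j"
  by (simp add: outerp_def)

lemma outerp_contract:
  fixes a b v :: "real^'n::finite"
  shows "v v* outerp a b = (v \<bullet> a) *\<^sub>R b" "outerp a b *v v = (b \<bullet> v) *\<^sub>R a"
  by (simp_all add: vec_eq_iff vector_matrix_mult_def matrix_vector_mult_def outerp_def inner_vec_def
      sum_distrib_left sum_distrib_right algebra_simps)

theorem mainTheorem12:
  fixes u u1 u2 u3 :: "real \<Rightarrow> real^'n" and A :: "real^'n^'n" and S :: "real set"
  assumes skew: "transpose A = - A"
    and S: "open S"
    and d1: "\<And>z. z \<in> S \<Longrightarrow> (u has_vector_derivative u1 z) (at z)"
    and d2: "\<And>z. z \<in> S \<Longrightarrow> (u1 has_vector_derivative u2 z) (at z)"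
    and d3: "\<And>z. z \<in> S \<Longrightarrow> (u2 has_vector_derivative u3 z) (at z)"
    and eq: "\<And>z. z \<in> S \<Longrightarrow>
               u3 z = (3 * (u z \<bullet> u z)) *\<^sub>R u1 z + z *\<^sub>R u1 z + u z + A *v u z"
  shows "\<forall>z \<in> S. \<forall>\<zeta>::real. \<zeta> \<noteq> 0 \<longrightarrow>
           ((\<lambda>t. LaxA A (u t) (u1 t) (u2 t) t \<zeta>) has_vector_derivative
              (vector_derivative (\<lambda>s. LaxB (u z) s) (at \<zeta>)
               + (LaxB (u z) \<zeta> ** LaxA A (u z) (u1 z) (u2 z) z \<zeta>
                  - LaxA A (u z) (u1 z) (u2 z) z \<zeta> ** LaxB (u z) \<zeta>))) (at z)"
proof (intro ballI allI impI)
  fix z \<zeta> :: real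
  assume z: "z \<in> S" and \<zeta>: "\<zeta> \<noteq> 0"
  have skv: "\<And>v. v v* A = - (A *v v)"
    by (metis transpose_matrix_vector skew vm_lin(12))
  note h1 = d1[OF z] and h2 = d2[OF z] and h3 = d3[OF z] and e3 = eq[OF z]
  have vd: "vector_derivative (\<lambda>s. LaxB (u z) s) (at \<zeta>) = LB0"
    unfolding LaxB_def
    by (rule vector_derivative_at) (auto intro!: derivative_eq_intros)
  show "((\<lambda>t. LaxA A (u t) (u1 t) (u2 t) t \<zeta>) has_vector_derivative
              (vector_derivative (\<lambda>s. LaxB (u z) s) (at \<zeta>)
               + (LaxB (u z) \<zeta> ** LaxA A (u z) (u1 z) (u2 z) z \<zeta>
                  - LaxA A (u z) (u1 z) (u2 z) z \<zeta> ** LaxB (u z) \<zeta>))) (at z)"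
    unfolding vd unfolding LaxA_def LaxB_def LB0_def LB1_def LB2_def LB3_def LA0_def
    apply (simp only: blockM_add blockM_diff blockM_scaleR blockM_uminus blockM_mult)
    apply (rule blockM_hvd')
    subgoal
      apply (rule derivative_eq_intros hvd_inner_field hvd_outerp h1 h2 h3 refl)+
      unfolding e3
      using \<zeta> apply (simp add: vec_eq_iff field_simps vm_lin outerp_contract skv outerp_nth inner_add_left inner_add_right inner_diff_left inner_diff_right inner_commute)
      done
    subgoal
      apply (rule derivative_eq_intros hvd_inner_field hvd_outerp h1 h2 h3 refl)+
      unfolding e3
      using \<zeta> apply (simp add: vec_eq_iff field_simps vm_lin outerp_contract skv outerp_nth inner_add_left inner_add_right inner_diff_left inner_diff_right inner_commute)
      done
    subgoal
      apply (rule derivative_eq_intros hvd_inner_field hvd_outerp h1 h2 h3 refl)+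
      unfolding e3
      using \<zeta> apply (simp add: vec_eq_iff field_simps vm_lin outerp_contract skv outerp_nth inner_add_left inner_add_right inner_diff_left inner_diff_right inner_commute)
      done
    subgoal
      apply (rule derivative_eq_intros hvd_inner_field hvd_outerp h1 h2 h3 refl)+
      unfolding e3
      using \<zeta> apply (simp add: vec_eq_iff field_simps vm_lin outerp_contract skv outerp_nth inner_add_left inner_add_right inner_diff_left inner_diff_right inner_commute)
      done
    subgoal
      apply (rule derivative_eq_intros hvd_inner_field hvd_outerp h1 h2 h3 refl)+
      unfolding e3
      using \<zeta> apply (simp add: vec_eq_iff field_simps vm_lin outerp_contract skv outerp_nth inner_add_left inner_add_right inner_diff_left inner_diff_right inner_commute)
      done
    subgoal
      apply (rule derivative_eq_intros hvd_inner_field hvd_outerp h1 h2 h3 refl)+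
      unfolding e3
      using \<zeta> apply (simp add: vec_eq_iff field_simps vm_lin outerp_contract skv outerp_nth inner_add_left inner_add_right inner_diff_left inner_diff_right inner_commute)
      done
    subgoal
      apply (rule derivative_eq_intros hvd_inner_field hvd_outerp h1 h2 h3 refl)+
      unfolding e3
      using \<zeta> apply (simp add: vec_eq_iff field_simps vm_lin outerp_contract skv outerp_nth inner_add_left inner_add_right inner_diff_left inner_diff_right inner_commute)
      done
    subgoal
      apply (rule derivative_eq_intros hvd_inner_field hvd_outerp h1 h2 h3 refl)+
      unfolding e3
      using \<zeta> apply (simp add: vec_eq_iff field_simps vm_lin outerp_contract skv outerp_nth inner_add_left inner_add_right inner_diff_left inner_diff_right inner_commute)
      done
    subgoal
      apply (rule derivative_eq_intros hvd_inner_field hvd_outerp h1 h2 h3 refl)+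
      unfolding e3
      using \<zeta> apply (simp add: vec_eq_iff field_simps vm_lin outerp_contract skv outerp_nth inner_add_left inner_add_right inner_diff_left inner_diff_right inner_commute)
      done
    done
qed

end
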